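(* Let \(G=(V,E)\) be a split graph with clique \(C\) and independent set \(I\) (so \(V=C\cup I\), disjointly), and let \(\sigma=(v_1,\dots,v_n)\) be an MNS ordering of \(V\). Then for every pair of vertices \(v_i\in I\) and \(v_j\in C\) with \(j>i\), the following hold, where \(l:=|\{v_1,\dots,v_{i-1}\}\cap C|\): (1) \(\{v_1,\dots,v_{i-1}\}\cap C\subseteq N(v_i)\); (2) \(\{v_{i+1},\dots,v_{i+\deg(v_i)-l}\}\subseteq N(v_i)\).
   Context: \(N(v)\) is the neighborhood of \(v\) and \(\deg(v)=|N(v)|\). An MNS (Maximum Neighborhood Search) ordering is a vertex ordering produced as follows for some start vertex \(s\) and some tie-breaking: all vertices get label \(\emptyset\), then \(s\) gets label \(\{n+1\}\); for \(i=1,\dots,n\), pick an unnumbered vertex whose label is maximal under set inclusion among the labels of unnumbered vertices, set it as \(v_i\), and add \(i\) to the label of each unnumbered neighbor of it. *)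

theory Defs
  imports Main
begin

definition simple_graph :: "'a set \<Rightarrow> ('a \<Rightarrow> 'a \<Rightarrow> bool) \<Rightarrow> bool" where
  "simple_graph V E \<longleftrightarrow> finite V \<and> (\<forall>u v. E u v \<longrightarrow> u \<in> V \<and> v \<in> V)
     \<and> (\<forall>u v. E u v \<longrightarrow> E v u) \<and> (\<forall>v. \<not> E v v)"

definition nbhd :: "'a set \<Rightarrow> ('a \<Rightarrow> 'a \<Rightarrow> bool) \<Rightarrow> 'a \<Rightarrow> 'a set" where
  "nbhd V E v = {u \<in> V. E v u}"

definition deg :: "'a set \<Rightarrow> ('a \<Rightarrow> 'a \<Rightarrow> bool) \<Rightarrow> 'a \<Rightarrow> nat" where
  "deg V E v = card (nbhd V E v)"

definition split_graph :: "'a set \<Rightarrow> ('a \<Rightarrow> 'a \<Rightarrow> bool) \<Rightarrow> 'a set \<Rightarrow> 'a set \<Rightarrow> bool" where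
  "split_graph V E C I \<longleftrightarrow> simple_graph V E \<and> C \<union> I = V \<and> C \<inter> I = {}
     \<and> (\<forall>u\<in>C. \<forall>v\<in>C. u \<noteq> v \<longrightarrow> E u v) \<and> (\<forall>u\<in>I. \<forall>v\<in>I. \<not> E u v)"

text \<open>The ordering is a list \<sigma>, with v_i = \<sigma> ! (i - 1) for 1 \<le> i \<le> n.
  Label of vertex w at the start of step i (i.e. after v_1..v_(i-1) have been numbered):
  the indices j < i of numbered neighbours, plus n+1 if w is the start vertex s.\<close>
definition mns_label :: "('a \<Rightarrow> 'a \<Rightarrow> bool) \<Rightarrow> 'a list \<Rightarrow> 'a \<Rightarrow> nat \<Rightarrow> 'a \<Rightarrow> nat set" where
  "mns_label E \<sigma> s i w =
     {j. 1 \<le> j \<and> j < i \<and> E (\<sigma> ! (j - 1)) w} \<union> (if w = s then {length \<sigma> + 1} else {})"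

definition is_MNS_ordering :: "'a set \<Rightarrow> ('a \<Rightarrow> 'a \<Rightarrow> bool) \<Rightarrow> 'a list \<Rightarrow> bool" where
  "is_MNS_ordering V E \<sigma> \<longleftrightarrow> distinct \<sigma> \<and> set \<sigma> = V \<and>
     (\<exists>s\<in>V. \<forall>i\<in>{1..length \<sigma>}. \<forall>w\<in>set (drop (i - 1) \<sigma>).
        \<not> (mns_label E \<sigma> s i (\<sigma> ! (i - 1)) \<subset> mns_label E \<sigma> s i w))"

end

theory Submission
  imports Defs
begin

lemma mns_start:
  assumes "is_MNS_ordering V E \<sigma>" "\<sigma> \<noteq> []"
  obtains s where "s = \<sigma>!0" and "\<forall>i\<in>{1..length \<sigma>}. \<forall>w\<in>set (drop (i - 1) \<sigma>).
        \<not> (mns_label E \<sigma> s i (\<sigma> ! (i - 1)) \<subset> mns_label E \<sigma> s i w)"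
proof -
  from assms(1) obtain s where sV: "s\<in>V" and M: "\<forall>i\<in>{1..length \<sigma>}. \<forall>w\<in>set (drop (i - 1) \<sigma>).
        \<not> (mns_label E \<sigma> s i (\<sigma> ! (i - 1)) \<subset> mns_label E \<sigma> s i w)" and sv: "set \<sigma> = V"
    unfolding is_MNS_ordering_def by blast
  have "s = \<sigma>!0"
  proof (rule ccontr)
    assume ne: "s \<noteq> \<sigma>!0"
    have "1 \<in> {1..length \<sigma>}" using assms(2) by (simp add: Suc_le_eq)
    moreover have "s \<in> set (drop (1 - 1) \<sigma>)" using sV sv by simp
    ultimately have "\<not> (mns_label E \<sigma> s 1 (\<sigma>!(1-1)) \<subset> mns_label E \<sigma> s 1 s)" using M by blast
    moreover have "mns_label E \<sigma> s 1 (\<sigma>!(1-1)) = {}" using ne unfolding mns_label_def by auto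
    moreover have "mns_label E \<sigma> s 1 s = {length \<sigma> + 1}" unfolding mns_label_def by auto
    ultimately show False by auto
  qed
  then show thesis using that M by blast
qed

theorem lemma15:
  fixes V C I :: "'a set" and E :: "'a \<Rightarrow> 'a \<Rightarrow> bool" and \<sigma> :: "'a list" and i j :: nat
  assumes "split_graph V E C I"
    and "is_MNS_ordering V E \<sigma>"
    and "1 \<le> i" and "i < j" and "j \<le> length \<sigma>"
    and "\<sigma> ! (i - 1) \<in> I" and "\<sigma> ! (j - 1) \<in> C"
  defines "l \<equiv> card ({\<sigma> ! (k - 1) | k. 1 \<le> k \<and> k < i} \<inter> C)"
  shows "{\<sigma> ! (k - 1) | k. 1 \<le> k \<and> k < i} \<inter> C \<subseteq> nbhd V E (\<sigma> ! (i - 1))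
    \<and> {\<sigma> ! (k - 1) | k. i + 1 \<le> k \<and> k \<le> i + (deg V E (\<sigma> ! (i - 1)) - l)}
           \<subseteq> nbhd V E (\<sigma> ! (i - 1))"
proof -
  let ?n = "length \<sigma>"
  let ?x = "\<sigma>!(i-1)"
  let ?F = "{\<sigma> ! (k - 1) | k. 1 \<le> k \<and> k < i}"
  have sg: "simple_graph V E" and CI: "C \<union> I = V" "C \<inter> I = {}"
    and Ccl: "\<forall>u\<in>C. \<forall>v\<in>C. u \<noteq> v \<longrightarrow> E u v" and Iind: "\<forall>u\<in>I. \<forall>v\<in>I. \<not> E u v"
    using assms(1) unfolding split_graph_def by auto
  have fin: "finite V" and Ein: "\<And>u v. E u v \<Longrightarrow> u \<in> V \<and> v \<in> V"
    and Esym: "\<And>u v. E u v \<Longrightarrow> E v u" and irr: "\<And>v. \<not> E v v"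
    using sg unfolding simple_graph_def by auto
  have dist: "distinct \<sigma>" and setV: "set \<sigma> = V" using assms(2) unfolding is_MNS_ordering_def by auto
  have nne: "\<sigma> \<noteq> []" using assms(4,5) by auto
  obtain s where s0: "s = \<sigma>!0" and M: "\<forall>i\<in>{1..length \<sigma>}. \<forall>w\<in>set (drop (i - 1) \<sigma>).
        \<not> (mns_label E \<sigma> s i (\<sigma> ! (i - 1)) \<subset> mns_label E \<sigma> s i w)"
    using mns_start[OF assms(2) nne] by blast
  have inV: "\<And>p. p < ?n \<Longrightarrow> \<sigma>!p \<in> V" using setV nth_mem by blast
  have inj: "\<And>p q. p < ?n \<Longrightarrow> q < ?n \<Longrightarrow> \<sigma>!p = \<sigma>!q \<Longrightarrow> p = q"
    using dist nth_eq_iff_index_eq by blast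
  have Mstep: "\<not> (mns_label E \<sigma> s m (\<sigma>!(m-1)) \<subset> mns_label E \<sigma> s m (\<sigma>!p))"
    if "1 \<le> m" "m \<le> ?n" "m - 1 \<le> p" "p < ?n" for m p
  proof -
    have "drop (m-1) \<sigma> ! (p - (m-1)) = \<sigma>!p" using that by simp
    moreover have "p - (m-1) < length (drop (m-1) \<sigma>)" using that by simp
    ultimately have "\<sigma>!p \<in> set (drop (m-1) \<sigma>)" by (metis nth_mem)
    then show ?thesis using M that by auto
  qed
  have lab: "mns_label E \<sigma> s m (\<sigma>!p) = {k. 1 \<le> k \<and> k < m \<and> E (\<sigma>!(k-1)) (\<sigma>!p)}"
    if "0 < p" "p < ?n" for m p
  proof -
    have "\<sigma>!p \<noteq> s" using s0 inj[of p 0] that nne by auto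
    then show ?thesis unfolding mns_label_def by auto
  qed
  have i_n: "i < ?n" using assms by simp
  have keyA: "{k. 1 \<le> k \<and> k < i \<and> E (\<sigma>!(k-1)) (\<sigma>!q)} = {k. 1 \<le> k \<and> k < i \<and> \<sigma>!(k-1) \<in> C}
     \<and> {k. 1 \<le> k \<and> k < i \<and> E (\<sigma>!(k-1)) ?x} = {k. 1 \<le> k \<and> k < i \<and> \<sigma>!(k-1) \<in> C}"
    if q: "i - 1 < q" "q < ?n" "\<sigma>!q \<in> C" for q
  proof (cases "i = 1")
    case True then show ?thesis by auto
  next
    case False
    have s1: "{k. 1 \<le> k \<and> k < i \<and> E (\<sigma>!(k-1)) ?x} \<subseteq> {k. 1 \<le> k \<and> k < i \<and> \<sigma>!(k-1) \<in> C}"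
    proof
      fix k assume k: "k \<in> {k. 1 \<le> k \<and> k < i \<and> E (\<sigma>!(k-1)) ?x}"
      then have "\<sigma>!(k-1) \<in> V" using Ein by blast
      moreover have "\<sigma>!(k-1) \<notin> I" using k Iind assms(6) by blast
      ultimately show "k \<in> {k. 1 \<le> k \<and> k < i \<and> \<sigma>!(k-1) \<in> C}" using k CI by auto
    qed
    have s2: "{k. 1 \<le> k \<and> k < i \<and> \<sigma>!(k-1) \<in> C} \<subseteq> {k. 1 \<le> k \<and> k < i \<and> E (\<sigma>!(k-1)) (\<sigma>!q)}"
    proof
      fix k assume k: "k \<in> {k. 1 \<le> k \<and> k < i \<and> \<sigma>!(k-1) \<in> C}"
      have "\<sigma>!(k-1) \<noteq> \<sigma>!q" using inj[of "k-1" q] k q i_n by auto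
      then show "k \<in> {k. 1 \<le> k \<and> k < i \<and> E (\<sigma>!(k-1)) (\<sigma>!q)}" using k q Ccl by auto
    qed
    have "\<not> (mns_label E \<sigma> s i ?x \<subset> mns_label E \<sigma> s i (\<sigma>!q))"
      using Mstep[of i q] q assms(3) i_n by auto
    moreover have "mns_label E \<sigma> s i ?x = {k. 1 \<le> k \<and> k < i \<and> E (\<sigma>!(k-1)) ?x}"
      using lab[of "i-1" i] False assms(3) i_n by auto
    moreover have "mns_label E \<sigma> s i (\<sigma>!q) = {k. 1 \<le> k \<and> k < i \<and> E (\<sigma>!(k-1)) (\<sigma>!q)}"
      using lab[of q i] q by auto
    ultimately show ?thesis using s1 s2 by auto
  qed
  have part1: "?F \<inter> C \<subseteq> nbhd V E ?x"
  proof
    fix y assume y: "y \<in> ?F \<inter> C"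
    then obtain k where k: "y = \<sigma>!(k-1)" "1 \<le> k" "k < i" by blast
    have "k \<in> {k. 1 \<le> k \<and> k < i \<and> E (\<sigma>!(k-1)) ?x}"
      using keyA[of "j-1"] assms(3,4,5,7) k y by auto
    then have "E ?x y" using k Esym by auto
    then show "y \<in> nbhd V E ?x" unfolding nbhd_def using Ein by auto
  qed
  define R where "R = nbhd V E ?x - ?F"
  have FC: "nbhd V E ?x \<inter> ?F = ?F \<inter> C"
  proof
    show "nbhd V E ?x \<inter> ?F \<subseteq> ?F \<inter> C"
    proof
      fix u assume u: "u \<in> nbhd V E ?x \<inter> ?F"
      then have "E ?x u" "u \<in> V" unfolding nbhd_def by auto
      then have "u \<notin> I" using Iind assms(6) by blast
      then show "u \<in> ?F \<inter> C" using u \<open>u \<in> V\<close> CI by auto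
    qed
    show "?F \<inter> C \<subseteq> nbhd V E ?x \<inter> ?F" using part1 by auto
  qed
  have finN: "finite (nbhd V E ?x)" using fin unfolding nbhd_def by auto
  have cardR: "card R = deg V E ?x - l"
    unfolding R_def deg_def l_def using card_Diff_subset_Int[of "nbhd V E ?x" ?F] finN FC by auto
  have finR: "finite R" unfolding R_def using finN by auto
  have RC: "r \<in> C \<and> (\<exists>p. i - 1 < p \<and> p < ?n \<and> r = \<sigma>!p)" if r: "r \<in> R" for r
  proof -
    have Er: "E ?x r" "r \<in> V" using r unfolding R_def nbhd_def by auto
    then have "r \<notin> I" using Iind assms(6) by blast
    then have rC: "r \<in> C" using Er CI by auto
    obtain p where p: "p < ?n" "r = \<sigma>!p" using Er setV by (metis in_set_conv_nth)
    have "\<not> p < i - 1"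
    proof
      assume "p < i - 1"
      then have "r \<in> ?F" using p by (intro CollectI exI[of _ "p+1"]) auto
      then show False using r unfolding R_def by auto
    qed
    moreover have "p \<noteq> i - 1" using Er irr p by auto
    ultimately have "i - 1 < p" by auto
    then show ?thesis using rC p(1,2) by (intro conjI exI[of _ p]) simp_all
  qed
  have main: "i < m \<Longrightarrow> m \<le> i + card R \<Longrightarrow> \<sigma>!(m-1) \<in> R \<and> m \<le> ?n" for m
  proof (induction m rule: less_induct)
    case (less m)
    have IH: "\<And>m'. i < m' \<Longrightarrow> m' < m \<Longrightarrow> \<sigma>!(m'-1) \<in> R \<and> m' \<le> ?n" using less by auto
    let ?P = "(\<lambda>m'. \<sigma>!(m'-1)) ` {i<..<m}"
    have PR: "?P \<subseteq> R" using IH by auto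
    have "inj_on (\<lambda>m'. \<sigma>!(m'-1)) {i<..<m}"
    proof (rule inj_onI)
      fix a b assume ab: "a \<in> {i<..<m}" "b \<in> {i<..<m}" "\<sigma>!(a-1) = \<sigma>!(b-1)"
      then have "a \<le> ?n" "b \<le> ?n" using IH by auto
      then have "a - 1 = b - 1" using inj[of "a-1" "b-1"] ab assms(3) by auto
      then show "a = b" using ab assms(3) by auto
    qed
    then have "card ?P = m - Suc i" by (simp add: card_image)
    then have cP: "card ?P < card R" using less by auto
    obtain r where r: "r \<in> R" "r \<notin> ?P"
    proof -
      have "\<not> R \<subseteq> ?P"
      proof
        assume "R \<subseteq> ?P"
        then have "card R \<le> card ?P" by (intro card_mono) auto
        then show False using cP by auto
      qed
      then show thesis using that by blast
    qed
    from RC[OF r(1)] obtain p where p: "i - 1 < p" "p < ?n" "r = \<sigma>!p" and rC: "r \<in> C" by blast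
    have mp: "m - 1 \<le> p"
    proof (rule ccontr)
      assume "\<not> m - 1 \<le> p"
      then have "Suc p \<in> {i<..<m}" using p assms(3) by auto
      then have "r \<in> ?P" using p by (metis diff_Suc_1 image_eqI)
      then show False using r by auto
    qed
    then have mn: "m \<le> ?n" using p by auto
    have "\<sigma>!(m-1) \<in> R"
    proof (rule ccontr)
      assume yR: "\<sigma>!(m-1) \<notin> R"
      let ?y = "\<sigma>!(m-1)"
      have yV: "?y \<in> V" using inV mn less(2) by auto
      have nxy: "\<not> E ?x ?y"
      proof
        assume Exy: "E ?x ?y"
        have "?y \<notin> ?F"
        proof
          assume "?y \<in> ?F"
          then obtain k where k: "?y = \<sigma>!(k-1)" "1 \<le> k" "k < i" by blast
          then have "m - 1 = k - 1" using inj[of "m-1" "k-1"] mn less(2) i_n by auto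
          then show False using k less(2) by auto
        qed
        then have "?y \<in> R" unfolding R_def nbhd_def using Exy yV by auto
        then show False using yR by auto
      qed
      let ?Ly = "{k. 1 \<le> k \<and> k < m \<and> E (\<sigma>!(k-1)) ?y}"
      let ?Lr = "{k. 1 \<le> k \<and> k < m \<and> E (\<sigma>!(k-1)) r}"
      have L1: "i \<in> ?Lr" using r(1) less(2) assms(3) unfolding R_def nbhd_def by auto
      have L2: "i \<notin> ?Ly" using nxy by auto
      have L3: "?Ly \<subseteq> ?Lr"
      proof
        fix k assume k: "k \<in> ?Ly"
        let ?z = "\<sigma>!(k-1)"
        have zV: "?z \<in> V" using k mn inV by auto
        have "E ?z r"
        proof (cases "k < i")
          case True
          have zr: "?z \<noteq> r"
          proof
            assume "?z = r"
            then have "\<sigma>!(k-1) = \<sigma>!p" using p(3) by simp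
            moreover have "k - 1 < length \<sigma>" using True i_n by linarith
            ultimately have "k - 1 = p" using inj p(2) by blast
            then show False using True p(1) by linarith
          qed
          show ?thesis
          proof (cases "?z \<in> C")
            case True then show ?thesis using Ccl rC zr by auto
          next
            case False
            then have zI: "?z \<in> I" using zV CI by auto
            have yI: "?y \<notin> I" using Iind zI k by auto
            then have yC: "?y \<in> C" using yV CI by auto
            have kin: "k \<in> {k. 1 \<le> k \<and> k < i \<and> E (\<sigma>!(k-1)) ?y}" using k True by auto
            have eq: "{k. 1 \<le> k \<and> k < i \<and> E (\<sigma>!(k-1)) ?y} = {k. 1 \<le> k \<and> k < i \<and> \<sigma>!(k-1) \<in> C}"
            proof -
              have a1: "i - 1 < m - 1" using less(2) assms(3) by linarith
              have a2: "m - 1 < length \<sigma>" using mn less(2) by linarith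
              show ?thesis using keyA[OF a1 a2 yC] by (rule conjunct1)
            qed
            have "?z \<in> C" using kin unfolding eq by simp
            then show ?thesis using False by auto
          qed
        next
          case False
          then have "k \<noteq> i" using k nxy by auto
          then have "i < k" using False by auto
          have km: "k < m" using k by simp
          have "?z \<in> R" using IH[OF \<open>i < k\<close> km] by (rule conjunct1)
          then have zC: "?z \<in> C" using RC by blast
          have zr: "?z \<noteq> r"
          proof
            assume "?z = r"
            then have "\<sigma>!(k-1) = \<sigma>!p" using p(3) by simp
            moreover have "k - 1 < length \<sigma>" using km mn by linarith
            ultimately have "k - 1 = p" using inj p(2) by blast
            then show False using km mp \<open>i < k\<close> by linarith
          qed
          then show ?thesis using Ccl rC zC by auto
        qed
        then show "k \<in> ?Lr" using k by auto
      qed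
      have "?Ly \<subset> ?Lr" using L1 L2 L3 by auto
      moreover have "mns_label E \<sigma> s m ?y = ?Ly" using lab[of "m-1" m] less(2) assms(3) mn by auto
      moreover have "mns_label E \<sigma> s m r = ?Lr" using lab[of p m] p by auto
      moreover have "\<not> (mns_label E \<sigma> s m ?y \<subset> mns_label E \<sigma> s m (\<sigma>!p))"
        using Mstep[of m p] less(2) assms(3) mn mp p(2) by linarith
      ultimately show False using p(3) by simp
    qed
    then show ?case using mn by auto
  qed
  have part2: "{\<sigma> ! (k - 1) | k. i + 1 \<le> k \<and> k \<le> i + (deg V E ?x - l)} \<subseteq> nbhd V E ?x"
  proof
    fix u assume "u \<in> {\<sigma> ! (k - 1) | k. i + 1 \<le> k \<and> k \<le> i + (deg V E ?x - l)}"
    then obtain k where k: "u = \<sigma>!(k-1)" "i + 1 \<le> k" "k \<le> i + card R" using cardR by auto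
    then have "u \<in> R" using main[of k] by auto
    then show "u \<in> nbhd V E ?x" unfolding R_def by auto
  qed
  show ?thesis using part1 part2 by blast
qed

end
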